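(* Let $f:(\mathbb C^2,0)\to(\mathbb C,0)$ be an irreducible plane curve germ which is singular at $0$, let $p,q$ be coprime positive integers, and let $G(M)$ be the plumbing graph of $M=S^3_{-p/q}(K_f)$ described in the context. Then $G(M)$ is an almost rational (AR) graph.
   Context: $K_f=\{f=0\}\cap S^3_\epsilon\subset S^3$ is the (algebraic) knot of $f$; it is not the unknot. Let $G(f)$ be the minimal embedded good resolution graph of $f$ (a tree of rational curves decorated by self-intersection numbers); it has a unique vertex $v_0$ with decoration $-1$, and the strict transform of $\{f=0\}$ meets the exceptional curve $E_{v_0}$. Let $\bar G$ be this graph with the arrow (strict transform) removed, and let $m_f$ be the vanishing order of the pull-back of $f$ along $E_{v_0}$. Write $p/q=[k_1,\dots,k_s]=k_1-1/(k_2-1/(\cdots-1/k_s))$ with integers $k_1\ge 1$ and $k_j\ge2$ for $j\ge 2$. The graph $G(M)$ is obtained from $\bar G$ by attaching a chain of vertices $v_1,\dots,v_s$ (with $v_1$ joined to $v_0$ and $v_j$ joined to $v_{j+1}$), where $v_1$ has Euler number $-k_1-m_f$ and $v_j$ has Euler number $-k_j$ for $2\le j\le s$; it is a negative definite plumbing graph (all vertices genus $0$ spheres) whose plumbed 3-manifold is $M$. For a connected negative definite plumbing tree with lattice $L$ (basis the vertices, intersection form given by Euler numbers on the diagonal and $1$ for adjacent vertices) and canonical class $K$ (defined by $(K,b_v)=-e_v-2$ for every vertex $v$), the graph is called rational if $-(l,l+K)/2\ge 1$ for every nonzero $l\ge0$ in $L$ (Artin's criterion). A graph is called almost rational (AR)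 if it has a vertex $v$ such that replacing the Euler number $e_v$ by any smaller integer yields a rational graph. *)

theory Defs
  imports "HOL-Analysis.Analysis"
begin

text \<open>A plumbing graph is given by a vertex set V (a finite set of naturals), Euler numbers
  e and a symmetric adjacency relation A. Lattice elements are integer functions on V.\<close>

definition pl_form :: "nat set \<Rightarrow> (nat \<Rightarrow> int) \<Rightarrow> (nat \<Rightarrow> nat \<Rightarrow> bool)
    \<Rightarrow> (nat \<Rightarrow> int) \<Rightarrow> (nat \<Rightarrow> int) \<Rightarrow> int" where
  "pl_form V e A l l' = (\<Sum>v\<in>V. e v * l v * l' v)
      + (\<Sum>u\<in>V. \<Sum>v\<in>V. if A u v then l u * l' v else 0)"

text \<open>Pairing with the canonical class K, defined by (K, b_v) = - e_v - 2.\<close>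
definition pl_K :: "nat set \<Rightarrow> (nat \<Rightarrow> int) \<Rightarrow> (nat \<Rightarrow> int) \<Rightarrow> int" where
  "pl_K V e l = (\<Sum>v\<in>V. (- e v - 2) * l v)"

text \<open>Artin's criterion: -(l, l+K)/2 \<ge> 1 for every nonzero l \<ge> 0.\<close>
definition rational_graph :: "nat set \<Rightarrow> (nat \<Rightarrow> int) \<Rightarrow> (nat \<Rightarrow> nat \<Rightarrow> bool) \<Rightarrow> bool" where
  "rational_graph V e A \<longleftrightarrow>
     (\<forall>l. (\<forall>v\<in>V. 0 \<le> l v) \<and> (\<exists>v\<in>V. l v \<noteq> 0) \<longrightarrow>
          - (pl_form V e A l l + pl_K V e l) \<ge> 2)"

definition AR_graph :: "nat set \<Rightarrow> (nat \<Rightarrow> int) \<Rightarrow> (nat \<Rightarrow> nat \<Rightarrow> bool) \<Rightarrow> bool" where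
  "AR_graph V e A \<longleftrightarrow> (\<exists>v\<in>V. \<forall>x::int. x < e v \<longrightarrow> rational_graph V (e(v := x)) A)"

fun hjcf :: "int list \<Rightarrow> real" where
  "hjcf [] = 0"
| "hjcf [k] = of_int k"
| "hjcf (k # ks) = of_int k - 1 / hjcf ks"

section \<open>Minimal embedded good resolution of a plane branch, by point blow-ups\<close>

text \<open>A state of the resolution process: the strict transform of the branch, parametrised as
  t \<mapsto> (px t, py t) in local coordinates (x,y) centred at the point where it meets the
  current exceptional divisor; ax / ay record which exceptional curve (if any) is the
  coordinate axis x = 0 / y = 0; nv is the number of exceptional curves created so far
  (numbered 0..nv-1), eu their self-intersections, adj the dual graph, and mu the vanishing
  order of the pull-back of f along each of them.\<close>

record rstate =
  px :: "complex fps"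
  py :: "complex fps"
  ax :: "nat option"
  ay :: "nat option"
  nv :: nat
  eu :: "nat \<Rightarrow> int"
  adj :: "nat \<Rightarrow> nat \<Rightarrow> bool"
  mu :: "nat \<Rightarrow> nat"

definition bmult :: "complex fps \<Rightarrow> complex fps \<Rightarrow> nat" where
  "bmult X Y = (if X = 0 then subdegree Y else if Y = 0 then subdegree X
                else min (subdegree X) (subdegree Y))"

text \<open>Exact quotient F / G of power series when subdegree G \<le> subdegree F.\<close>
definition fdiv :: "complex fps \<Rightarrow> complex fps \<Rightarrow> complex fps" where
  "fdiv F G = fps_shift (subdegree G) F * inverse (fps_shift (subdegree G) G)"

definition through :: "rstate \<Rightarrow> nat \<Rightarrow> bool" where
  "through st c \<longleftrightarrow> ax st = Some c \<or> ay st = Some c"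

definition optmu :: "rstate \<Rightarrow> nat option \<Rightarrow> nat" where
  "optmu st o' = (case o' of None \<Rightarrow> 0 | Some c \<Rightarrow> mu st c)"

definition blowup :: "rstate \<Rightarrow> rstate" where
  "blowup st =
    (let X = px st; Y = py st; k = nv st;
         eu' = (\<lambda>c. if c = k then -1 else if through st c then eu st c - 1 else eu st c);
         adj' = (\<lambda>u v. (adj st u v \<and> \<not> (through st u \<and> through st v))
                       \<or> (u = k \<and> through st v) \<or> (v = k \<and> through st u));
         mu' = (mu st)(k := bmult X Y + optmu st (ax st) + optmu st (ay st))
     in if Y = 0 \<or> subdegree X \<le> subdegree Y then
          (let Y1 = fdiv Y X; c = fps_nth Y1 0 in
           \<lparr> px = X, py = Y1 - fps_const c, ax = Some k,
             ay = (if c = 0 then ay st else None),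
             nv = k + 1, eu = eu', adj = adj', mu = mu' \<rparr>)
        else
          \<lparr> px = fdiv X Y, py = Y, ax = ax st, ay = Some k,
            nv = k + 1, eu = eu', adj = adj', mu = mu' \<rparr>)"

text \<open>The total transform is a normal crossing divisor at the point on the strict transform.\<close>
definition good :: "rstate \<Rightarrow> bool" where
  "good st \<longleftrightarrow>
    (case (ax st, ay st) of
       (None, None) \<Rightarrow> bmult (px st) (py st) = 1
     | (Some _, None) \<Rightarrow> px st \<noteq> 0 \<and> subdegree (px st) = 1
     | (None, Some _) \<Rightarrow> py st \<noteq> 0 \<and> subdegree (py st) = 1
     | (Some _, Some _) \<Rightarrow> False)"

inductive resolves :: "rstate \<Rightarrow> rstate \<Rightarrow> bool" where
  finished: "good st \<Longrightarrow> resolves st st"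
| blowstep: "\<not> good st \<Longrightarrow> resolves (blowup st) R \<Longrightarrow> resolves st R"

definition init_state :: "nat \<Rightarrow> complex fps \<Rightarrow> rstate" where
  "init_state n y = \<lparr> px = fps_X ^ n, py = y, ax = None, ay = None, nv = 0,
                      eu = (\<lambda>_. 0), adj = (\<lambda>_ _. False), mu = (\<lambda>_. 0) \<rparr>"

section \<open>The plumbing graph G(M) of M = S^3_{-p/q}(K_f)\<close>

text \<open>Vertices 0..nv-1 form \<bar>G; v0 = nv - 1 is the last exceptional curve (the (-1)-curve
  met by the strict transform), m_f = mu v0; the chain v_1..v_s gets vertices nv..nv+s-1.\<close>

definition GM_V :: "rstate \<Rightarrow> int list \<Rightarrow> nat set" where
  "GM_V R ks = {..< nv R + length ks}"

definition GM_e :: "rstate \<Rightarrow> int list \<Rightarrow> nat \<Rightarrow> int" where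
  "GM_e R ks v =
     (if v < nv R then eu R v
      else if v = nv R then - (ks ! 0) - int (mu R (nv R - 1))
      else - (ks ! (v - nv R)))"

definition GM_A :: "rstate \<Rightarrow> int list \<Rightarrow> nat \<Rightarrow> nat \<Rightarrow> bool" where
  "GM_A R ks u v \<longleftrightarrow>
     (u < nv R \<and> v < nv R \<and> adj R u v)
   \<or> (u = nv R - 1 \<and> v = nv R) \<or> (v = nv R - 1 \<and> u = nv R)
   \<or> (nv R \<le> u \<and> v = u + 1 \<and> v < nv R + length ks)
   \<or> (nv R \<le> v \<and> u = v + 1 \<and> u < nv R + length ks)"

end

theory Submission
  imports Defs
begin

unbundle no vec_syntax
notation fps_nth (infixl \<open>$\<close> 75)


lemma dsum_insert:
  assumes "finite V" "w \<notin> V"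
  shows "(\<Sum>u\<in>insert w V. \<Sum>v\<in>insert w V. f u v :: int) =
         f w w + (\<Sum>v\<in>V. f w v) + (\<Sum>u\<in>V. f u w) + (\<Sum>u\<in>V. \<Sum>v\<in>V. f u v)"
  using assms by (simp add: sum.insert sum.distrib)

lemma sq_plus_ge0: "(a::int) * a + a \<ge> 0"
proof (cases "a \<ge> 0")
  case True then show ?thesis by (simp add: add_nonneg_nonneg)
next
  case False then have "a \<le> -1" by simp
  then have "a * (a + 1) \<ge> 0" by (simp add: mult_nonpos_nonpos)
  then show ?thesis by (simp add: algebra_simps)
qed

lemma rational_cong:
  assumes "\<forall>v\<in>V. e v = e' v" "\<forall>u\<in>V. \<forall>v\<in>V. A u v = A' u v"
  shows "rational_graph V e A = rational_graph V e' A'"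
proof -
  have "pl_form V e A l l = pl_form V e' A' l l" for l
    unfolding pl_form_def using assms by (auto intro!: sum.cong)
  moreover have "pl_K V e l = pl_K V e' l" for l
    unfolding pl_K_def using assms by (auto intro!: sum.cong)
  ultimately show ?thesis unfolding rational_graph_def by simp
qed

lemma rational_mono:
  assumes "rational_graph V e A" "\<forall>v\<in>V. e' v \<le> e v"
  shows "rational_graph V e' A"
  unfolding rational_graph_def
proof (intro allI impI)
  fix l :: "nat \<Rightarrow> int" assume l: "(\<forall>v\<in>V. 0 \<le> l v) \<and> (\<exists>v\<in>V. l v \<noteq> 0)"
  have h: "- (pl_form V e A l l + pl_K V e l) \<ge> 2" using assms(1) l unfolding rational_graph_def by blast
  have eq: "pl_form V e' A l l + pl_K V e' l = pl_form V e A l l + pl_K V e l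
      - (\<Sum>v\<in>V. (e v - e' v) * (l v * l v - l v))"
    unfolding pl_form_def pl_K_def
    by (simp add: sum_subtractf[symmetric] sum.distrib[symmetric] algebra_simps)
  have "(\<Sum>v\<in>V. (e v - e' v) * (l v * l v - l v)) \<ge> 0"
  proof (rule sum_nonneg)
    fix v assume "v \<in> V"
    have "l v * l v - l v \<ge> 0" using sq_plus_ge0[of "- l v"] by simp
    moreover have "e v - e' v \<ge> 0" using assms(2) \<open>v\<in>V\<close> by simp
    ultimately show "(e v - e' v) * (l v * l v - l v) \<ge> 0" by simp
  qed
  then show "- (pl_form V e' A l l + pl_K V e' l) \<ge> 2" using h eq by linarith
qed

lemma rational_attach:
  assumes rat: "rational_graph V e A" and fin: "finite V" and u: "u \<in> V" and w: "w \<notin> V"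
    and A1: "\<forall>x\<in>V. \<forall>y\<in>V. A' x y = A x y"
    and A2: "\<forall>x\<in>V. A' w x = (x = u) \<and> A' x w = (x = u)" and A3: "\<not> A' w w"
    and e1: "\<forall>x\<in>V. x \<noteq> u \<longrightarrow> e' x = e x" and e2: "e' u = e u - 1" and e3: "e' w \<le> -1"
  shows "rational_graph (insert w V) e' A'"
  unfolding rational_graph_def
proof (intro allI impI)
  fix l :: "nat \<Rightarrow> int" assume l: "(\<forall>v\<in>insert w V. 0 \<le> l v) \<and> (\<exists>v\<in>insert w V. l v \<noteq> 0)"
  define T where "T = pl_form V e A l l + pl_K V e l"
  define c where "c = l w"
  define b where "b = - e' w"
  have sE: "(\<Sum>v\<in>V. e' v * l v * l v) = (\<Sum>v\<in>V. e v * l v * l v) - l u * l u"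
  proof -
    have "(\<Sum>v\<in>V. e' v * l v * l v) = (\<Sum>v\<in>V. e v * l v * l v - (if v = u then l u * l u else 0))"
      using e1 by (intro sum.cong) (auto simp: e2 algebra_simps)
    also have "\<dots> = (\<Sum>v\<in>V. e v * l v * l v) - l u * l u"
      using fin u by (simp add: sum_subtractf)
    finally show ?thesis .
  qed
  have sK: "(\<Sum>v\<in>V. (- e' v - 2) * l v) = (\<Sum>v\<in>V. (- e v - 2) * l v) + l u"
  proof -
    have "(\<Sum>v\<in>V. (- e' v - 2) * l v) = (\<Sum>v\<in>V. (- e v - 2) * l v + (if v = u then l u else 0))"
      using e1 by (intro sum.cong) (auto simp: e2 algebra_simps)
    also have "\<dots> = (\<Sum>v\<in>V. (- e v - 2) * l v) + l u"
      using fin u by (simp add: sum.distrib)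
    finally show ?thesis .
  qed
  have sA: "(\<Sum>x\<in>V. \<Sum>y\<in>V. if A' x y then l x * l y else 0) = (\<Sum>x\<in>V. \<Sum>y\<in>V. if A x y then l x * l y else 0)"
    using A1 by (intro sum.cong) auto
  have sW1: "(\<Sum>y\<in>V. if A' w y then l w * l y else 0) = l w * l u"
  proof -
    have "(\<Sum>y\<in>V. if A' w y then l w * l y else 0) = (\<Sum>y\<in>V. if y = u then l w * l y else 0)"
      using A2 by (intro sum.cong) auto
    then show ?thesis using fin u by simp
  qed
  have sW2: "(\<Sum>x\<in>V. if A' x w then l x * l w else 0) = l w * l u"
  proof -
    have "(\<Sum>x\<in>V. if A' x w then l x * l w else 0) = (\<Sum>x\<in>V. if x = u then l x * l w else 0)"
      using A2 by (intro sum.cong) auto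
    then show ?thesis using fin u by simp
  qed
  have f1: "pl_form (insert w V) e' A' l l = e' w * l w * l w + ((\<Sum>v\<in>V. e v * l v * l v) - l u * l u)
      + (l w * l u + l w * l u + (\<Sum>x\<in>V. \<Sum>y\<in>V. if A x y then l x * l y else 0))"
    unfolding pl_form_def
    apply (subst dsum_insert[OF fin w])
    apply (subst sum.insert[OF fin w])
    apply (simp only: sE sW1 sW2 sA)
    using A3 by simp
  have f2: "pl_K (insert w V) e' l = (- e' w - 2) * l w + ((\<Sum>v\<in>V. (- e v - 2) * l v) + l u)"
    unfolding pl_K_def
    apply (subst sum.insert[OF fin w])
    apply (simp only: sK)
    done
  have Te: "T = (\<Sum>v\<in>V. e v * l v * l v) + (\<Sum>x\<in>V. \<Sum>y\<in>V. if A x y then l x * l y else 0) + (\<Sum>v\<in>V. (- e v - 2) * l v)"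
    unfolding T_def pl_form_def pl_K_def by simp
  have eq: "pl_form (insert w V) e' A' l l + pl_K (insert w V) e' l
      = T - l u * l u + 2 * c * l u - b * c * c + l u + (b - 2) * c"
    unfolding f1 f2 Te c_def b_def by (simp add: algebra_simps)
  define a where "a = c - l u"
  have eq2: "- (pl_form (insert w V) e' A' l l + pl_K (insert w V) e' l)
       = - T + (a * a + a) + (b - 1) * (c * c - c)"
    unfolding eq a_def by (simp add: algebra_simps)
  have b1: "b - 1 \<ge> 0" using e3 b_def by simp
  have cc: "c * c - c \<ge> 0" using sq_plus_ge0[of "- c"] by simp
  have p2: "(b - 1) * (c * c - c) \<ge> 0" using b1 cc by simp
  have aa: "a * a + a \<ge> 0" by (rule sq_plus_ge0)
  show "- (pl_form (insert w V) e' A' l l + pl_K (insert w V) e' l) \<ge> 2"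
  proof (cases "\<exists>v\<in>V. l v \<noteq> 0")
    case True
    then have "- T \<ge> 2" using rat l unfolding rational_graph_def T_def by auto
    then show ?thesis using eq2 p2 aa by linarith
  next
    case False
    then have z: "\<forall>v\<in>V. l v = 0" by auto
    have "T = 0" unfolding T_def pl_form_def pl_K_def using z by (simp add: sum.neutral)
    moreover have "c > 0" using l z c_def by force
    moreover have "l u = 0" using z u by simp
    ultimately have "a \<ge> 1" "-T = 0" using a_def by auto
    then have "a * a + a \<ge> 2"
      by (smt (verit) mult_le_cancel_right1)
    then show ?thesis using eq2 p2 \<open>-T = 0\<close> by linarith
  qed
qed

lemma rational_blow:
  assumes rat: "rational_graph V e A" and fin: "finite V" and k: "k \<notin> V" and Th: "Th \<subseteq> V"
    and clique: "\<forall>u\<in>Th. \<forall>v\<in>Th. A u v = (u \<noteq> v)"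
    and A1: "\<forall>x\<in>V. \<forall>y\<in>V. A' x y = (A x y \<and> \<not> (x \<in> Th \<and> y \<in> Th))"
    and A2: "\<forall>x\<in>V. A' k x = (x \<in> Th) \<and> A' x k = (x \<in> Th)" and A3: "\<not> A' k k"
    and e1: "\<forall>x\<in>V. e' x = e x - (if x \<in> Th then 1 else 0)" and e2: "e' k = -1"
  shows "rational_graph (insert k V) e' A'"
  unfolding rational_graph_def
proof (intro allI impI)
  fix l :: "nat \<Rightarrow> int" assume l: "(\<forall>v\<in>insert k V. 0 \<le> l v) \<and> (\<exists>v\<in>insert k V. l v \<noteq> 0)"
  define T where "T = pl_form V e A l l + pl_K V e l"
  define c where "c = l k"
  define S where "S = (\<Sum>v\<in>Th. l v)"
  define Q where "Q = (\<Sum>v\<in>Th. l v * l v)"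
  have finT: "finite Th" using fin Th finite_subset by blast
  have sE: "(\<Sum>v\<in>V. e' v * l v * l v) = (\<Sum>v\<in>V. e v * l v * l v) - Q"
  proof -
    have "(\<Sum>v\<in>V. e' v * l v * l v) = (\<Sum>v\<in>V. e v * l v * l v - (if v \<in> Th then l v * l v else 0))"
    proof (intro sum.cong refl)
      fix x assume "x \<in> V"
      then have ex: "e' x = e x - (if x \<in> Th then 1 else 0)" using e1 by blast
      show "e' x * l x * l x = e x * l x * l x - (if x \<in> Th then l x * l x else 0)" unfolding ex by (simp add: algebra_simps)
    qed
    also have "\<dots> = (\<Sum>v\<in>V. e v * l v * l v) - (\<Sum>v\<in>V. if v \<in> Th then l v * l v else 0)"
      by (simp add: sum_subtractf)
    also have "(\<Sum>v\<in>V. if v \<in> Th then l v * l v else 0) = Q"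
      unfolding Q_def using fin Th by (simp add: sum.If_cases Int_absorb1)
    finally show ?thesis .
  qed
  have sK: "(\<Sum>v\<in>V. (- e' v - 2) * l v) = (\<Sum>v\<in>V. (- e v - 2) * l v) + S"
  proof -
    have "(\<Sum>v\<in>V. (- e' v - 2) * l v) = (\<Sum>v\<in>V. (- e v - 2) * l v + (if v \<in> Th then l v else 0))"
    proof (intro sum.cong refl)
      fix x assume "x \<in> V"
      then have ex: "e' x = e x - (if x \<in> Th then 1 else 0)" using e1 by blast
      show "(- e' x - 2) * l x = (- e x - 2) * l x + (if x \<in> Th then l x else 0)" unfolding ex by (simp add: algebra_simps)
    qed
    also have "\<dots> = (\<Sum>v\<in>V. (- e v - 2) * l v) + (\<Sum>v\<in>V. if v \<in> Th then l v else 0)"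
      by (simp add: sum.distrib)
    also have "(\<Sum>v\<in>V. if v \<in> Th then l v else 0) = S"
      unfolding S_def using fin Th by (simp add: sum.If_cases Int_absorb1)
    finally show ?thesis .
  qed
  have sA: "(\<Sum>x\<in>V. \<Sum>y\<in>V. if A' x y then l x * l y else 0) =
      (\<Sum>x\<in>V. \<Sum>y\<in>V. if A x y then l x * l y else 0) - (S * S - Q)"
  proof -
    have "(\<Sum>x\<in>V. \<Sum>y\<in>V. if A' x y then l x * l y else 0) =
      (\<Sum>x\<in>V. \<Sum>y\<in>V. (if A x y then l x * l y else 0) - (if x \<in> Th \<and> y \<in> Th \<and> A x y then l x * l y else 0))"
      using A1 by (intro sum.cong) auto
    also have "\<dots> = (\<Sum>x\<in>V. \<Sum>y\<in>V. if A x y then l x * l y else 0) - (\<Sum>x\<in>V. \<Sum>y\<in>V. if x \<in> Th \<and> y \<in> Th \<and> A x y then l x * l y else 0)"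
      by (simp add: sum_subtractf)
    also have "(\<Sum>x\<in>V. \<Sum>y\<in>V. if x \<in> Th \<and> y \<in> Th \<and> A x y then l x * l y else 0)
       = (\<Sum>x\<in>Th. \<Sum>y\<in>Th. if A x y then l x * l y else 0)"
    proof -
      have "(\<Sum>x\<in>V. \<Sum>y\<in>V. if x \<in> Th \<and> y \<in> Th \<and> A x y then l x * l y else 0)
          = (\<Sum>x\<in>V. if x \<in> Th then (\<Sum>y\<in>V. if y \<in> Th then (if A x y then l x * l y else 0) else 0) else 0)"
        by (intro sum.cong refl) (auto intro: sum.cong)
      also have "\<dots> = (\<Sum>x\<in>Th. (\<Sum>y\<in>V. if y \<in> Th then (if A x y then l x * l y else 0) else 0))"
        using fin Th by (simp add: sum.If_cases Int_absorb1)
      also have "\<dots> = (\<Sum>x\<in>Th. \<Sum>y\<in>Th. if A x y then l x * l y else 0)"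
        using fin Th by (simp add: sum.If_cases Int_absorb1)
      finally show ?thesis .
    qed
    also have "(\<Sum>x\<in>Th. \<Sum>y\<in>Th. if A x y then l x * l y else 0) = (\<Sum>x\<in>Th. \<Sum>y\<in>Th. l x * l y - (if x = y then l x * l y else 0))"
      using clique by (intro sum.cong) auto
    also have "\<dots> = S * S - Q"
      unfolding S_def Q_def using finT by (simp add: sum_subtractf sum_product)
    finally show ?thesis .
  qed
  have sW1: "(\<Sum>y\<in>V. if A' k y then l k * l y else 0) = c * S"
  proof -
    have "(\<Sum>y\<in>V. if A' k y then l k * l y else 0) = (\<Sum>y\<in>V. if y \<in> Th then l k * l y else 0)"
      using A2 by (intro sum.cong) auto
    also have "\<dots> = c * S" unfolding c_def S_def using fin Th by (simp add: sum.If_cases Int_absorb1 sum_distrib_left)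
    finally show ?thesis .
  qed
  have sW2: "(\<Sum>x\<in>V. if A' x k then l x * l k else 0) = c * S"
  proof -
    have "(\<Sum>x\<in>V. if A' x k then l x * l k else 0) = (\<Sum>y\<in>V. if y \<in> Th then l k * l y else 0)"
      using A2 by (intro sum.cong) auto
    also have "\<dots> = c * S" unfolding c_def S_def using fin Th by (simp add: sum.If_cases Int_absorb1 sum_distrib_left)
    finally show ?thesis .
  qed
  have f1: "pl_form (insert k V) e' A' l l = e' k * l k * l k + ((\<Sum>v\<in>V. e v * l v * l v) - Q)
      + (c * S + c * S + ((\<Sum>x\<in>V. \<Sum>y\<in>V. if A x y then l x * l y else 0) - (S * S - Q)))"
    unfolding pl_form_def
    apply (subst dsum_insert[OF fin k])
    apply (subst sum.insert[OF fin k])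
    apply (simp only: sE sW1 sW2 sA)
    using A3 by simp
  have f2: "pl_K (insert k V) e' l = (- e' k - 2) * l k + ((\<Sum>v\<in>V. (- e v - 2) * l v) + S)"
    unfolding pl_K_def
    apply (subst sum.insert[OF fin k])
    apply (simp only: sK)
    done
  have Te: "T = (\<Sum>v\<in>V. e v * l v * l v) + (\<Sum>x\<in>V. \<Sum>y\<in>V. if A x y then l x * l y else 0) + (\<Sum>v\<in>V. (- e v - 2) * l v)"
    unfolding T_def pl_form_def pl_K_def by simp
  define a where "a = c - S"
  have eq2: "- (pl_form (insert k V) e' A' l l + pl_K (insert k V) e' l) = - T + (a * a + a)"
    unfolding f1 f2 Te a_def c_def e2 by (simp add: algebra_simps)
  have aa: "a * a + a \<ge> 0" by (rule sq_plus_ge0)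
  show "- (pl_form (insert k V) e' A' l l + pl_K (insert k V) e' l) \<ge> 2"
  proof (cases "\<exists>v\<in>V. l v \<noteq> 0")
    case True
    then have "- T \<ge> 2" using rat l unfolding rational_graph_def T_def by auto
    then show ?thesis using eq2 aa by linarith
  next
    case False
    then have z: "\<forall>v\<in>V. l v = 0" by auto
    have "T = 0" unfolding T_def pl_form_def pl_K_def using z by (simp add: sum.neutral)
    moreover have "c > 0" using l z c_def by force
    moreover have "S = 0" unfolding S_def using z Th by (auto intro: sum.neutral)
    ultimately have "a \<ge> 1" "-T = 0" using a_def by auto
    then have "a * a + a \<ge> 2"
      by (smt (verit) mult_le_cancel_right1)
    then show ?thesis using eq2 \<open>-T = 0\<close> by linarith
  qed
qed


lemma fdiv_mult:
  assumes "X \<noteq> 0" "Y = 0 \<or> subdegree X \<le> subdegree Y"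
  shows "X * fdiv Y X = Y"
proof -
  define s where "s = subdegree X"
  have X: "X = fps_shift s X * fps_X ^ s" unfolding s_def by (rule subdegree_decompose)
  have Y: "Y = fps_shift s Y * fps_X ^ s"
    using assms(2) unfolding s_def by (auto intro: subdegree_decompose')
  have n0: "fps_shift s X $ 0 \<noteq> 0" using assms(1) unfolding s_def by simp
  have "X * fdiv Y X = (fps_shift s X * inverse (fps_shift s X)) * (fps_shift s Y * fps_X ^ s)"
    unfolding fdiv_def s_def[symmetric] by (subst X) (simp add: algebra_simps)
  also have "\<dots> = Y" using inverse_mult_eq_1'[OF n0] Y by simp
  finally show ?thesis .
qed

lemma fdiv_b2:
  assumes "Y \<noteq> 0" "subdegree Y < subdegree X"
  shows "fdiv X Y $ 0 = 0" "fdiv X Y \<noteq> 0" "Y * fdiv X Y = X"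
proof -
  show "Y * fdiv X Y = X" using fdiv_mult[of Y X] assms by simp
  have "X \<noteq> 0" using assms by auto
  then show "fdiv X Y \<noteq> 0" using \<open>Y * fdiv X Y = X\<close> by auto
  have z: "fps_shift (subdegree Y) X $ 0 = 0" unfolding fps_shift_nth add_0 by (rule nth_less_subdegree_zero[OF assms(2)])
  show "fdiv X Y $ 0 = 0" unfolding fdiv_def fps_mult_nth_0 z by (rule mult_zero_left)
qed

definition thr :: "rstate \<Rightarrow> nat \<Rightarrow> bool" where "thr st c = through st c"

lemma blowup_common:
  "nv (blowup st) = nv st + 1"
  "eu (blowup st) = (\<lambda>c. if c = nv st then -1 else if through st c then eu st c - 1 else eu st c)"
  "adj (blowup st) = (\<lambda>u v. (adj st u v \<and> \<not> (through st u \<and> through st v))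
                       \<or> (u = nv st \<and> through st v) \<or> (v = nv st \<and> through st u))"
  "mu (blowup st) = (mu st)(nv st := bmult (px st) (py st) + optmu st (ax st) + optmu st (ay st))"
  unfolding blowup_def Let_def by auto

lemma blowup_b1:
  assumes "py st = 0 \<or> subdegree (px st) \<le> subdegree (py st)"
  shows "px (blowup st) = px st"
    "py (blowup st) = fdiv (py st) (px st) - fps_const (fdiv (py st) (px st) $ 0)"
    "ax (blowup st) = Some (nv st)"
    "ay (blowup st) = (if fdiv (py st) (px st) $ 0 = 0 then ay st else None)"
  using assms unfolding blowup_def Let_def by auto

lemma blowup_b2:
  assumes "\<not> (py st = 0 \<or> subdegree (px st) \<le> subdegree (py st))"
  shows "px (blowup st) = fdiv (px st) (py st)"
    "py (blowup st) = py st"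
    "ax (blowup st) = ax st"
    "ay (blowup st) = Some (nv st)"
  using assms unfolding blowup_def Let_def by auto

definition INV :: "rstate \<Rightarrow> bool" where
  "INV st \<longleftrightarrow> px st \<noteq> 0 \<and> px st $ 0 = 0 \<and> py st $ 0 = 0 \<and> (ay st \<noteq> None \<longrightarrow> py st \<noteq> 0)
    \<and> (\<forall>j. ax st = Some j \<longrightarrow> j < nv st) \<and> (\<forall>j. ay st = Some j \<longrightarrow> j < nv st)
    \<and> (\<forall>i j. ax st = Some i \<and> ay st = Some j \<longrightarrow> i \<noteq> j \<and> adj st i j \<and> adj st j i)
    \<and> (\<forall>u. \<not> adj st u u) \<and> (\<forall>u v. adj st u v \<longrightarrow> u < nv st \<and> v < nv st)
    \<and> rational_graph {..<nv st} (eu st) (adj st)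
    \<and> (nv st > 0 \<longrightarrow> eu st (nv st - 1) = -1 \<and> mu st (nv st - 1) \<ge> 1)"

lemma bmult_pos:
  assumes "X \<noteq> 0" "X $ 0 = 0" "Y $ 0 = 0"
  shows "bmult X Y \<ge> 1"
proof -
  have "subdegree X \<noteq> 0" using assms subdegree_eq_0_iff by blast
  moreover have "Y \<noteq> 0 \<Longrightarrow> subdegree Y \<noteq> 0" using assms subdegree_eq_0_iff by blast
  ultimately show ?thesis unfolding bmult_def using assms by auto
qed

lemma INV_blowup:
  assumes I: "INV st"
  shows "INV (blowup st)"
proof -
  define k where "k = nv st"
  define X where "X = px st"
  define Y where "Y = py st"
  have X0: "X \<noteq> 0" "X $ 0 = 0" and Y0: "Y $ 0 = 0" and ayY: "ay st \<noteq> None \<longrightarrow> Y \<noteq> 0"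
    using I unfolding INV_def X_def Y_def by auto
  have axk: "\<forall>j. ax st = Some j \<longrightarrow> j < k" and ayk: "\<forall>j. ay st = Some j \<longrightarrow> j < k"
    using I unfolding INV_def k_def by auto
  have both: "\<forall>i j. ax st = Some i \<and> ay st = Some j \<longrightarrow> i \<noteq> j \<and> adj st i j \<and> adj st j i"
    and irr: "\<forall>u. \<not> adj st u u" and inV: "\<forall>u v. adj st u v \<longrightarrow> u < k \<and> v < k"
    and rat: "rational_graph {..<k} (eu st) (adj st)"
    using I unfolding INV_def k_def by auto
  have thrk: "\<not> through st k" using axk ayk unfolding through_def by auto
  have thr_lt: "through st c \<Longrightarrow> c < k" for c using axk ayk unfolding through_def by auto
  let ?st' = "blowup st"
  have nv': "nv ?st' = k + 1" using blowup_common k_def by simp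
  have adj': "adj ?st' = (\<lambda>u v. (adj st u v \<and> \<not> (through st u \<and> through st v))
                       \<or> (u = k \<and> through st v) \<or> (v = k \<and> through st u))"
    using blowup_common k_def by simp
  have eu': "eu ?st' = (\<lambda>c. if c = k then -1 else if through st c then eu st c - 1 else eu st c)"
    using blowup_common k_def by simp
  have mu': "mu ?st' k = bmult X Y + optmu st (ax st) + optmu st (ay st)"
    using blowup_common k_def X_def Y_def by simp
  have fields: "px ?st' \<noteq> 0 \<and> px ?st' $ 0 = 0 \<and> py ?st' $ 0 = 0 \<and> (ay ?st' \<noteq> None \<longrightarrow> py ?st' \<noteq> 0)
     \<and> (\<forall>j. ax ?st' = Some j \<longrightarrow> j < nv ?st') \<and> (\<forall>j. ay ?st' = Some j \<longrightarrow> j < nv ?st')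
     \<and> (\<forall>i j. ax ?st' = Some i \<and> ay ?st' = Some j \<longrightarrow> i \<noteq> j \<and> adj ?st' i j \<and> adj ?st' j i)"
  proof (cases "Y = 0 \<or> subdegree X \<le> subdegree Y")
    case True
    note b = blowup_b1[OF True[unfolded X_def Y_def]]
    define Y1 where "Y1 = fdiv Y X"
    have XY: "X * Y1 = Y" unfolding Y1_def using fdiv_mult X0 True by blast
    have ay': "ay ?st' \<noteq> None \<Longrightarrow> py ?st' \<noteq> 0"
    proof -
      assume a: "ay ?st' \<noteq> None"
      then have c0: "Y1 $ 0 = 0" and "ay st \<noteq> None" using b(4) unfolding Y1_def X_def Y_def by (auto split: if_splits)
      then have "Y \<noteq> 0" using ayY by simp
      then have "Y1 \<noteq> 0" using XY by auto
      then show "py ?st' \<noteq> 0" using b(2) c0 unfolding Y1_def X_def Y_def by simp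
    qed
    have c1: "\<forall>j. ax ?st' = Some j \<longrightarrow> j < nv ?st'" using b(3) nv' k_def by simp
    have c2: "\<forall>j. ay ?st' = Some j \<longrightarrow> j < nv ?st'" using b(4) nv' ayk by (auto split: if_splits)
    have c3: "\<forall>i j. ax ?st' = Some i \<and> ay ?st' = Some j \<longrightarrow> i \<noteq> j \<and> adj ?st' i j \<and> adj ?st' j i"
    proof (intro allI impI)
      fix i j assume h: "ax ?st' = Some i \<and> ay ?st' = Some j"
      then have "i = k" "ay st = Some j" using b(3,4) k_def by (auto split: if_splits)
      then have "through st j" "j < k" using ayk unfolding through_def by auto
      then show "i \<noteq> j \<and> adj ?st' i j \<and> adj ?st' j i" using adj' \<open>i = k\<close> by simp
    qed
    have c4: "px ?st' \<noteq> 0 \<and> px ?st' $ 0 = 0 \<and> py ?st' $ 0 = 0" using b(1,2) X0 unfolding X_def by simp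
    show ?thesis using c1 c2 c3 c4 ay' by blast
  next
    case False
    note b = blowup_b2[OF False[unfolded X_def Y_def]]
    have Yn: "Y \<noteq> 0" "subdegree Y < subdegree X" using False by auto
    have c1: "\<forall>j. ax ?st' = Some j \<longrightarrow> j < nv ?st'" using b(3) nv' axk by auto
    have c2: "\<forall>j. ay ?st' = Some j \<longrightarrow> j < nv ?st'" using b(4) nv' k_def by simp
    have c3: "\<forall>i j. ax ?st' = Some i \<and> ay ?st' = Some j \<longrightarrow> i \<noteq> j \<and> adj ?st' i j \<and> adj ?st' j i"
    proof (intro allI impI)
      fix i j assume h: "ax ?st' = Some i \<and> ay ?st' = Some j"
      then have "j = k" "ax st = Some i" using b(3,4) k_def by auto
      then have "through st i" "i < k" using axk unfolding through_def by auto
      then show "i \<noteq> j \<and> adj ?st' i j \<and> adj ?st' j i" using adj' \<open>j = k\<close> by simp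
    qed
    have c4: "px ?st' \<noteq> 0 \<and> px ?st' $ 0 = 0 \<and> py ?st' $ 0 = 0 \<and> (ay ?st' \<noteq> None \<longrightarrow> py ?st' \<noteq> 0)"
      using b(1,2) fdiv_b2[OF Yn] Y0 Yn unfolding X_def Y_def by simp
    show ?thesis using c1 c2 c3 c4 by blast
  qed
  have irr': "\<forall>u. \<not> adj ?st' u u" using adj' irr thrk by auto
  have inV': "\<forall>u v. adj ?st' u v \<longrightarrow> u < nv ?st' \<and> v < nv ?st'"
  proof (intro allI impI)
    fix u v assume "adj ?st' u v"
    then have "adj st u v \<or> (u = k \<and> through st v) \<or> (v = k \<and> through st u)" unfolding adj' by auto
    moreover have "adj st u v \<Longrightarrow> u < k \<and> v < k" using inV by blast
    ultimately have "u \<le> k \<and> v \<le> k" using thr_lt by fastforce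
    then show "u < nv ?st' \<and> v < nv ?st'" unfolding nv' by simp
  qed
  have rat': "rational_graph {..<nv ?st'} (eu ?st') (adj ?st')"
  proof -
    have eqV: "{..<nv ?st'} = insert k {..<k}" using nv' by auto
    define Th where "Th = {v\<in>{..<k}. through st v}"
    have cl: "\<forall>u\<in>Th. \<forall>v\<in>Th. adj st u v = (u \<noteq> v)"
      using both irr unfolding through_def Th_def by auto
    have A1: "\<forall>x\<in>{..<k}. \<forall>y\<in>{..<k}. adj ?st' x y = (adj st x y \<and> \<not> (x \<in> Th \<and> y \<in> Th))"
      unfolding adj' Th_def by auto
    have A2: "\<forall>x\<in>{..<k}. adj ?st' k x = (x \<in> Th) \<and> adj ?st' x k = (x \<in> Th)"
    proof
      fix x assume x: "x \<in> {..<k}"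
      have "\<not> adj st k x" "\<not> adj st x k" using inV by auto
      then show "adj ?st' k x = (x \<in> Th) \<and> adj ?st' x k = (x \<in> Th)"
        unfolding adj' Th_def using x by auto
    qed
    have A3: "\<not> adj ?st' k k" unfolding adj' using irr thrk by simp
    have e1: "\<forall>x\<in>{..<k}. eu ?st' x = eu st x - (if x \<in> Th then 1 else 0)"
      unfolding eu' Th_def by auto
    have e2: "eu ?st' k = -1" unfolding eu' by simp
    show ?thesis unfolding eqV
      by (rule rational_blow[OF rat _ _ _ cl A1 A2 A3 e1 e2]) (auto simp: Th_def)
  qed
  have last': "eu ?st' (nv ?st' - 1) = -1 \<and> mu ?st' (nv ?st' - 1) \<ge> 1"
    using eu' mu' nv' bmult_pos[OF X0 Y0] by simp
  show ?thesis unfolding INV_def using fields irr' inV' rat' last' by blast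
qed

lemma INV_init:
  assumes "n \<ge> 1" "subdegree y \<ge> n"
  shows "INV (init_state n y)"
proof -
  have "y $ 0 = 0" using assms by (cases "y = 0") (auto intro: nth_less_subdegree_zero)
  moreover have "rational_graph {..<0} (\<lambda>_. 0) (\<lambda>_ _. False)" unfolding rational_graph_def by simp
  ultimately show ?thesis using assms unfolding INV_def init_state_def by simp
qed

lemma resolves_INV: "resolves st R \<Longrightarrow> INV st \<Longrightarrow> INV R"
  by (induction rule: resolves.induct) (auto intro: INV_blowup)

lemma resolves_nv: "resolves st R \<Longrightarrow> \<not> good st \<Longrightarrow> nv st < nv R"
proof (induction rule: resolves.induct)
  case (finished st) then show ?case by simp
next
  case (blowstep st R)
  have "nv (blowup st) \<le> nv R"
    using blowstep.IH blowstep.hyps(2) by (cases "good (blowup st)") (auto elim: resolves.cases)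
  then show ?case using blowup_common(1)[of st] by simp
qed


lemma AR_part:
  assumes I: "INV R" and N: "nv R > 0" and ks: "ks \<noteq> []" "hd ks \<ge> 1" "\<forall>k\<in>set (tl ks). k \<ge> 2"
  shows "AR_graph (GM_V R ks) (GM_e R ks) (GM_A R ks)"
proof -
  define N0 where "N0 = nv R"
  define v0 where "v0 = N0 - 1"
  define s where "s = length ks"
  have s1: "s \<ge> 1" using ks(1) s_def by (cases ks) auto
  have rat0: "rational_graph {..<N0} (eu R) (adj R)" and ev0: "eu R v0 = -1" and mf: "mu R v0 \<ge> 1"
    and inV: "\<forall>u v. adj R u v \<longrightarrow> u < N0 \<and> v < N0"
    using I N unfolding INV_def N0_def v0_def by auto
  have N0: "N0 > 0" using N N0_def by simp
  have k0: "ks ! 0 \<ge> 1" using ks by (cases ks) auto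
  have kj: "j \<ge> 1 \<Longrightarrow> j < s \<Longrightarrow> ks ! j \<ge> 2" for j
  proof -
    assume j: "j \<ge> 1" "j < s"
    have "ks ! j = tl ks ! (j - 1)" using j ks(1) by (cases ks) auto
    moreover have "tl ks ! (j - 1) \<in> set (tl ks)" using j s_def by (cases ks) auto
    ultimately show ?thesis using ks(3) by auto
  qed
  define E where "E j v = (if v < N0 then (if v = v0 then -2 else eu R v)
      else if v = N0 + j - 1 then GM_e R ks v + 1 else GM_e R ks v)" for j v
  have GMe_ge: "v \<ge> N0 \<Longrightarrow> GM_e R ks v = (if v = N0 then - (ks ! 0) - int (mu R v0) else - (ks ! (v - N0)))" for v
    unfolding GM_e_def N0_def v0_def by simp
  have chain: "1 \<le> j \<Longrightarrow> j \<le> s \<Longrightarrow> rational_graph {..<N0 + j} (E j) (GM_A R ks)" for j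
  proof (induction j)
    case 0 then show ?case by simp
  next
    case (Suc j)
    show ?case
    proof (cases "j = 0")
      case True
      have eqV: "{..<N0 + Suc j} = insert N0 {..<N0}" using True by auto
      show ?thesis unfolding eqV
      proof (rule rational_attach[OF rat0])
        show "\<forall>x\<in>{..<N0}. \<forall>y\<in>{..<N0}. GM_A R ks x y = adj R x y"
          unfolding GM_A_def N0_def by auto
        show "\<forall>x\<in>{..<N0}. GM_A R ks N0 x = (x = v0) \<and> GM_A R ks x N0 = (x = v0)"
          using N0 inV unfolding GM_A_def N0_def v0_def by auto
        show "\<not> GM_A R ks N0 N0" using N0 inV unfolding GM_A_def N0_def by auto
        show "\<forall>x\<in>{..<N0}. x \<noteq> v0 \<longrightarrow> E (Suc j) x = eu R x" unfolding E_def by auto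
        show "E (Suc j) v0 = eu R v0 - 1" unfolding E_def using ev0 N0 v0_def by simp
        show "E (Suc j) N0 \<le> -1" unfolding E_def using GMe_ge[of N0] True k0 mf by simp
      qed (use N0 v0_def in auto)
    next
      case False
      have j1: "j \<ge> 1" "j < s" using False Suc by auto
      have IH: "rational_graph {..<N0 + j} (E j) (GM_A R ks)" using Suc j1 by simp
      have eqV: "{..<N0 + Suc j} = insert (N0 + j) {..<N0 + j}" by auto
      show ?thesis unfolding eqV
      proof (rule rational_attach[OF IH, where u = "N0 + j - 1"])
        show "\<forall>x\<in>{..<N0 + j}. GM_A R ks (N0 + j) x = (x = N0 + j - 1) \<and> GM_A R ks x (N0 + j) = (x = N0 + j - 1)"
          using j1 N0 unfolding GM_A_def N0_def s_def by auto
        show "\<not> GM_A R ks (N0 + j) (N0 + j)" using j1 N0 unfolding GM_A_def N0_def by auto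
        show "\<forall>x\<in>{..<N0 + j}. x \<noteq> N0 + j - 1 \<longrightarrow> E (Suc j) x = E j x" unfolding E_def using j1 by auto
        show "E (Suc j) (N0 + j - 1) = E j (N0 + j - 1) - 1" unfolding E_def using j1 by auto
        show "E (Suc j) (N0 + j) \<le> -1" unfolding E_def using GMe_ge[of "N0 + j"] j1 kj[of j] by simp
      qed (use j1 in auto)
    qed
  qed
  have ratS: "rational_graph {..<N0 + s} (E s) (GM_A R ks)" using chain s1 by simp
  have V: "GM_V R ks = {..<N0 + s}" unfolding GM_V_def N0_def s_def by simp
  have e_v0: "GM_e R ks v0 = -1" unfolding GM_e_def using ev0 N0 N0_def v0_def by simp
  show ?thesis unfolding AR_graph_def
  proof (rule bexI[where x = v0], intro allI impI)
    fix x :: int assume x: "x < GM_e R ks v0"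
    show "rational_graph (GM_V R ks) ((GM_e R ks)(v0 := x)) (GM_A R ks)"
      unfolding V
    proof (rule rational_mono[OF ratS], intro ballI)
      fix v assume "v \<in> {..<N0 + s}"
      show "((GM_e R ks)(v0 := x)) v \<le> E s v"
        using x e_v0 unfolding E_def GM_e_def N0_def v0_def by auto
    qed
  next
    show "v0 \<in> GM_V R ks" unfolding V using N0 v0_def by simp
  qed
qed


lemma root_pow:
  assumes "1 \<le> g"
  shows "(exp (2 * of_real pi * \<i> / of_nat g)) ^ k = 1 \<longleftrightarrow> g dvd k"
proof -
  have "(exp (2 * of_real pi * \<i> / of_nat g)) ^ k = exp (of_nat k * (2 * of_real pi * \<i> / of_nat g))"
    by (rule exp_of_nat_mult[symmetric])
  also have "of_nat k * (2 * of_real pi * \<i> / of_nat g) = 2 * of_real pi * \<i> * of_nat k / (of_nat g :: complex)"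
    by (simp add: field_simps)
  finally show ?thesis using complex_root_unity_eq_1[OF assms, of k] by simp
qed

definition twist :: "complex \<Rightarrow> complex fps \<Rightarrow> complex fps" where
  "twist z F = Abs_fps (\<lambda>k. z ^ k * F $ k)"

lemma twist_nth [simp]: "twist z F $ k = z ^ k * F $ k"
  unfolding twist_def by simp

lemma twist_mult: "twist z (F * G) = twist z F * twist z G"
proof (rule fps_ext)
  fix k
  have "twist z (F * G) $ k = (\<Sum>i=0..k. z ^ k * (F $ i * G $ (k - i)))"
    by (simp add: fps_mult_nth sum_distrib_left)
  also have "\<dots> = (\<Sum>i=0..k. (z ^ i * F $ i) * (z ^ (k - i) * G $ (k - i)))"
  proof (rule sum.cong[OF refl])
    fix i assume "i \<in> {0..k}"
    then have "z ^ k = z ^ i * z ^ (k - i)" by (simp add: power_add[symmetric])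
    then show "z ^ k * (F $ i * G $ (k - i)) = (z ^ i * F $ i) * (z ^ (k - i) * G $ (k - i))"
      by (simp add: algebra_simps)
  qed
  also have "\<dots> = (twist z F * twist z G) $ k" by (simp add: fps_mult_nth)
  finally show "twist z (F * G) $ k = (twist z F * twist z G) $ k" .
qed

lemma twist_one: "twist z 1 = 1"
  by (rule fps_ext) (simp add: fps_one_nth)

lemma twist_power: "twist z (F ^ i) = (twist z F) ^ i"
  by (induction i) (simp_all add: twist_one twist_mult)

lemma twist_compose: "(P oo twist z G) = twist z (P oo G)"
proof (rule fps_ext)
  fix k
  show "(P oo twist z G) $ k = twist z (P oo G) $ k"
    by (simp add: fps_compose_nth twist_power[symmetric] sum_distrib_left algebra_simps)
qed

lemma mult_low:
  fixes F G :: "complex fps"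
  assumes "\<forall>i<a. F $ i = 0" "\<forall>j<b. G $ j = 0"
  shows "\<forall>k<a+b. (F * G) $ k = 0" "(F * G) $ (a + b) = F $ a * G $ b"
proof -
  show "\<forall>k<a+b. (F * G) $ k = 0"
  proof (intro allI impI)
    fix k assume k: "k < a + b"
    have "(F * G) $ k = (\<Sum>i=0..k. F $ i * G $ (k - i))" by (simp add: fps_mult_nth)
    also have "\<dots> = 0"
    proof (rule sum.neutral, intro ballI)
      fix i assume "i \<in> {0..k}"
      show "F $ i * G $ (k - i) = 0"
      proof (cases "i < a")
        case True then show ?thesis using assms by simp
      next
        case False
        have "i \<le> k" using \<open>i \<in> {0..k}\<close> by simp
        then have "k - i < b" using k False by arith
        then show ?thesis using assms by simp
      qed
    qed
    finally show "(F * G) $ k = 0" .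
  qed
  have "(F * G) $ (a + b) = (\<Sum>i=0..a+b. F $ i * G $ (a + b - i))" by (simp add: fps_mult_nth)
  also have "\<dots> = (\<Sum>i=0..a+b. if i = a then F $ a * G $ b else 0)"
  proof (rule sum.cong[OF refl])
    fix i assume "i \<in> {0..a+b}"
    show "F $ i * G $ (a + b - i) = (if i = a then F $ a * G $ b else 0)"
    proof (cases "i < a")
      case True then show ?thesis using assms by simp
    next
      case False
      show ?thesis
      proof (cases "i = a")
        case True then show ?thesis by simp
      next
        case False2: False
        have "i \<le> a + b" using \<open>i \<in> {0..a+b}\<close> by simp
        then have "a + b - i < b" using False False2 by arith
        then show ?thesis using assms False2 by simp
      qed
    qed
  qed
  also have "\<dots> = F $ a * G $ b" by simp
  finally show "(F * G) $ (a + b) = F $ a * G $ b" .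
qed

lemma pow_low:
  fixes G :: "complex fps"
  assumes "\<forall>j<g. G $ j = 0"
  shows "(\<forall>k<i*g. (G ^ i) $ k = 0) \<and> (G ^ i) $ (i * g) = (G $ g) ^ i"
proof (induction i)
  case 0 then show ?case by simp
next
  case (Suc i)
  have a: "\<forall>k<g + i*g. (G * G ^ i) $ k = 0" "(G * G ^ i) $ (g + i*g) = G $ g * (G ^ i) $ (i * g)"
    using mult_low[of g G "i*g" "G^i"] assms Suc by auto
  then show ?case using Suc by (simp add: add.commute)
qed

lemma powdiff:
  fixes H K :: "complex fps"
  assumes H: "\<forall>j<g. H $ j = 0" and K: "\<forall>j<g. K $ j = 0" and HK: "H $ g = K $ g"
    and D: "\<forall>j<e. (H - K) $ j = 0"
  shows "(\<forall>k<i*g+e. (H ^ Suc i - K ^ Suc i) $ k = 0) \<and>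
         (H ^ Suc i - K ^ Suc i) $ (i*g+e) = of_nat (Suc i) * (K $ g) ^ i * (H - K) $ e"
proof (induction i)
  case 0 then show ?case using D by simp
next
  case (Suc i)
  have split: "H ^ Suc (Suc i) - K ^ Suc (Suc i) = H * (H ^ Suc i - K ^ Suc i) + (H - K) * K ^ Suc i"
    by (simp add: algebra_simps)
  have m1: "\<forall>k<g + (i*g+e). (H * (H ^ Suc i - K ^ Suc i)) $ k = 0"
           "(H * (H ^ Suc i - K ^ Suc i)) $ (g + (i*g+e)) = H $ g * (H ^ Suc i - K ^ Suc i) $ (i*g+e)"
    using mult_low[of g H "i*g+e" "H ^ Suc i - K ^ Suc i"] H Suc by auto
  have pk: "(\<forall>k<Suc i*g. (K ^ Suc i) $ k = 0) \<and> (K ^ Suc i) $ (Suc i * g) = (K $ g) ^ Suc i"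
    using pow_low[OF K] by blast
  have m2: "\<forall>k<e + Suc i*g. ((H - K) * K ^ Suc i) $ k = 0"
           "((H - K) * K ^ Suc i) $ (e + Suc i * g) = (H - K) $ e * (K ^ Suc i) $ (Suc i * g)"
    using mult_low[of e "H - K" "Suc i * g" "K ^ Suc i"] D pk by auto
  have idx1: "g + (i*g+e) = Suc i * g + e" by simp
  have idx2: "e + Suc i * g = Suc i * g + e" by simp
  show ?case
  proof
    show "\<forall>k<Suc i * g + e. (H ^ Suc (Suc i) - K ^ Suc (Suc i)) $ k = 0"
      unfolding split using m1(1) m2(1) idx1 idx2 by simp
    have "(H ^ Suc (Suc i) - K ^ Suc (Suc i)) $ (Suc i * g + e)
        = H $ g * (of_nat (Suc i) * (K $ g) ^ i * (H - K) $ e) + (H - K) $ e * (K $ g) ^ Suc i"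
    proof -
      have a1: "(H * (H ^ Suc i - K ^ Suc i)) $ (Suc i * g + e) = H $ g * (H ^ Suc i - K ^ Suc i) $ (i*g+e)"
        using m1(2) unfolding idx1 .
      have a2: "((H - K) * K ^ Suc i) $ (Suc i * g + e) = (H - K) $ e * (K ^ Suc i) $ (Suc i * g)"
        using m2(2) unfolding idx2 .
      show ?thesis unfolding split fps_add_nth a1 a2 using Suc.IH pk by simp
    qed
    also have "\<dots> = of_nat (Suc (Suc i)) * (K $ g) ^ Suc i * (H - K) $ e"
      using HK by (simp add: algebra_simps)
    finally show "(H ^ Suc (Suc i) - K ^ Suc (Suc i)) $ (Suc i * g + e) = of_nat (Suc (Suc i)) * (K $ g) ^ Suc i * (H - K) $ e" .
  qed
qed


lemma comp_low:
  fixes P G :: "complex fps"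
  assumes Gz: "\<forall>j<g. G $ j = 0" and g: "g \<ge> 1" and Pz: "\<forall>i<m. P $ i = 0"
  shows "\<forall>k<m*g. (P oo G) $ k = 0" "(P oo G) $ (m * g) = P $ m * (G $ g) ^ m"
proof -
  have pl: "\<And>i. (\<forall>k<i*g. (G ^ i) $ k = 0) \<and> (G ^ i) $ (i * g) = (G $ g) ^ i"
    using pow_low[OF Gz] by blast
  show "\<forall>k<m*g. (P oo G) $ k = 0"
  proof (intro allI impI)
    fix k assume k: "k < m * g"
    have "(P oo G) $ k = (\<Sum>i=0..k. P $ i * (G ^ i) $ k)" by (simp add: fps_compose_nth)
    also have "\<dots> = 0"
    proof (rule sum.neutral, intro ballI)
      fix i assume "i \<in> {0..k}"
      show "P $ i * (G ^ i) $ k = 0"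
      proof (cases "i < m")
        case True then show ?thesis using Pz by simp
      next
        case False
        then have "m \<le> i" by simp
        then have "m * g \<le> i * g" by (rule mult_le_mono1)
        then have "k < i * g" using k by linarith
        then show ?thesis using pl[of i] by simp
      qed
    qed
    finally show "(P oo G) $ k = 0" .
  qed
  have "(P oo G) $ (m * g) = (\<Sum>i=0..m*g. P $ i * (G ^ i) $ (m * g))" by (simp add: fps_compose_nth)
  also have "\<dots> = (\<Sum>i=0..m*g. if i = m then P $ m * (G $ g) ^ m else 0)"
  proof (rule sum.cong[OF refl])
    fix i assume "i \<in> {0..m*g}"
    show "P $ i * (G ^ i) $ (m * g) = (if i = m then P $ m * (G $ g) ^ m else 0)"
    proof (cases "i < m")
      case True then show ?thesis using Pz by simp
    next
      case False
      show ?thesis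
      proof (cases "i = m")
        case True then show ?thesis using pl[of m] by simp
      next
        case False2: False
        then have "m < i" using False by simp
        then have "m * g < i * g" using g by simp
        then show ?thesis using pl[of i] False2 by simp
      qed
    qed
  qed
  also have "\<dots> = P $ m * (G $ g) ^ m" using g by simp
  finally show "(P oo G) $ (m * g) = P $ m * (G $ g) ^ m" .
qed

lemma key_prim:
  fixes G P Q y :: "complex fps" and n :: nat
  assumes G: "G \<noteq> 0" "subdegree G \<ge> 2" and n: "n \<ge> 1"
    and XP: "fps_X ^ n = P oo G" and yQ: "y = Q oo G"
  shows "Gcd ({n} \<union> {k. y $ k \<noteq> 0}) \<noteq> 1"
proof
  assume gcd1: "Gcd ({n} \<union> {k. y $ k \<noteq> 0}) = 1"
  define g where "g = subdegree G"
  have g2: "g \<ge> 2" using G g_def by simp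
  have Gz: "\<forall>j<g. G $ j = 0" unfolding g_def by (auto intro: nth_less_subdegree_zero)
  have Gg: "G $ g \<noteq> 0" unfolding g_def using G by simp
  have Pn0: "P \<noteq> 0"
  proof
    assume "P = 0"
    then have "fps_X ^ n = (0 :: complex fps)" using XP by simp
    then have "(fps_X ^ n :: complex fps) $ n = 0" by simp
    then show False by simp
  qed
  define m where "m = subdegree P"
  have Pz: "\<forall>i<m. P $ i = 0" unfolding m_def by (auto intro: nth_less_subdegree_zero)
  have Pm: "P $ m \<noteq> 0" unfolding m_def using Pn0 by simp
  note cl = comp_low[OF Gz _ Pz]
  have "(P oo G) $ (m * g) \<noteq> 0" using cl(2) g2 Pm Gg by simp
  then have mgn: "m * g = n" using XP[symmetric] by (simp split: if_splits)
  have m1: "m \<ge> 1" using mgn n by (cases m) auto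
  define z where "z = exp (2 * of_real pi * \<i> / of_nat g)"
  have zpow: "z ^ k = 1 \<longleftrightarrow> g dvd k" for k unfolding z_def using root_pow g2 by simp
  have gn: "g dvd n" using mgn by (metis dvd_triv_right)
  have zn: "z ^ n = 1" using zpow[of n] gn by blast
  define H where "H = twist z G"
  have PH: "P oo H = P oo G"
  proof -
    have "P oo H = twist z (fps_X ^ n)" unfolding H_def twist_compose XP by simp
    also have "\<dots> = fps_X ^ n" by (rule fps_ext) (simp add: zn)
    finally show ?thesis using XP by simp
  qed
  have HG: "H = G"
  proof (rule ccontr)
    assume ne: "H \<noteq> G"
    define D where "D = H - G"
    have Dn0: "D \<noteq> 0" using ne D_def by simp
    define e where "e = subdegree D"
    have Dz: "\<forall>j<e. D $ j = 0" unfolding e_def by (auto intro: nth_less_subdegree_zero)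
    have De: "D $ e \<noteq> 0" unfolding e_def using Dn0 by simp
    have Hz: "\<forall>j<g. H $ j = 0" unfolding H_def using Gz by simp
    have Hg: "H $ g = G $ g" unfolding H_def using zpow[of g] by simp
    have "\<forall>j\<le>g. D $ j = 0" unfolding D_def using Hz Gz Hg by (auto simp: le_less)
    then have eg: "e > g" using De by (meson not_less)
    obtain m' where m': "m = Suc m'" using m1 by (cases m) auto
    define E where "E = m' * g + e"
    have pd: "\<And>i. (\<forall>k<i*g+e. (H ^ Suc i - G ^ Suc i) $ k = 0) \<and>
         (H ^ Suc i - G ^ Suc i) $ (i*g+e) = of_nat (Suc i) * (G $ g) ^ i * (H - G) $ e"
      using powdiff[OF Hz Gz Hg, of e] Dz unfolding D_def by blast
    have "(P oo H) $ E - (P oo G) $ E = (\<Sum>i=0..E. P $ i * ((H ^ i) $ E - (G ^ i) $ E))"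
      by (simp only: fps_compose_nth sum_subtractf[symmetric] right_diff_distrib)
    also have "\<dots> = (\<Sum>i=0..E. if i = m then P $ m * (of_nat m * (G $ g) ^ m' * D $ e) else 0)"
    proof (rule sum.cong[OF refl])
      fix i assume "i \<in> {0..E}"
      show "P $ i * ((H ^ i) $ E - (G ^ i) $ E) = (if i = m then P $ m * (of_nat m * (G $ g) ^ m' * D $ e) else 0)"
      proof (cases "i < m")
        case True then show ?thesis using Pz by simp
      next
        case False
        show ?thesis
        proof (cases "i = m")
          case True then show ?thesis using pd[of m'] m' unfolding E_def D_def by simp
        next
          case False2: False
          then obtain i' where i': "i = Suc i'" "i' > m'" using False m' by (cases i) auto
          then have "E < i' * g + e" unfolding E_def using g2 by simp
          then have "(H ^ i - G ^ i) $ E = 0" using pd[of i'] i' by simp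
          then show ?thesis using False2 by simp
        qed
      qed
    qed
    also have "\<dots> = P $ m * (of_nat m * (G $ g) ^ m' * D $ e)"
    proof -
      have "m' * 1 \<le> m' * g" using g2 by (intro mult_le_mono2) simp
      then have "m \<le> E" unfolding E_def using m' eg by linarith
      then show ?thesis by simp
    qed
    finally have "(P oo H) $ E - (P oo G) $ E = P $ m * (of_nat m * (G $ g) ^ m' * D $ e)" .
    moreover have "P $ m * (of_nat m * (G $ g) ^ m' * D $ e) \<noteq> 0" using Pm Gg De m1 by simp
    ultimately show False using PH by simp
  qed
  have ty: "twist z y = y" unfolding yQ twist_compose[symmetric] H_def[symmetric] HG ..
  have "g dvd k" if "k \<in> {n} \<union> {k. y $ k \<noteq> 0}" for k
  proof (cases "k = n")
    case True then show ?thesis using gn by simp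
  next
    case False
    then have yk: "y $ k \<noteq> 0" using that by simp
    have "z ^ k * y $ k = y $ k" using ty by (metis twist_nth)
    then have "z ^ k = 1" using yk by simp
    then show ?thesis using zpow[of k] by blast
  qed
  then have "g dvd Gcd ({n} \<union> {k. y $ k \<noteq> 0})" by (rule Gcd_greatest)
  then have "g dvd 1" unfolding gcd1 .
  then show False using g2 by simp
qed


inductive_set gen :: "complex fps \<Rightarrow> complex fps \<Rightarrow> complex fps set" for X Y where
  gc: "fps_const c \<in> gen X Y"
| gx: "X \<in> gen X Y"
| gy: "Y \<in> gen X Y"
| ga: "a \<in> gen X Y \<Longrightarrow> b \<in> gen X Y \<Longrightarrow> a + b \<in> gen X Y"
| gm: "a \<in> gen X Y \<Longrightarrow> b \<in> gen X Y \<Longrightarrow> a * b \<in> gen X Y"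

lemma gen_sub:
  assumes "X \<in> gen X' Y'" "Y \<in> gen X' Y'"
  shows "gen X Y \<subseteq> gen X' Y'"
proof
  fix f assume "f \<in> gen X Y"
  then show "f \<in> gen X' Y'"
    by (induction rule: gen.induct) (auto intro: gen.intros assms)
qed

lemma gen_step:
  assumes I: "INV st"
  shows "gen (px st) (py st) \<subseteq> gen (px (blowup st)) (py (blowup st))"
proof -
  define X where "X = px st"
  define Y where "Y = py st"
  have X0: "X \<noteq> 0" using I unfolding INV_def X_def by simp
  show ?thesis
  proof (cases "Y = 0 \<or> subdegree X \<le> subdegree Y")
    case True
    note b = blowup_b1[OF True[unfolded X_def Y_def]]
    have "Y = X * (py (blowup st) + fps_const (fdiv Y X $ 0))"
      using b(2) fdiv_mult[OF X0 True] unfolding X_def Y_def by simp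
    then have "Y \<in> gen (px (blowup st)) (py (blowup st))"
      using b(1) unfolding X_def by (metis gen.intros)
    moreover have "X \<in> gen (px (blowup st)) (py (blowup st))" using b(1) X_def gen.gx by simp
    ultimately show ?thesis using gen_sub X_def Y_def by blast
  next
    case False
    note b = blowup_b2[OF False[unfolded X_def Y_def]]
    have Yn: "Y \<noteq> 0" "subdegree Y < subdegree X" using False by auto
    have "X = py (blowup st) * px (blowup st)"
      using b(1,2) fdiv_b2[OF Yn] unfolding X_def Y_def by simp
    then have "X \<in> gen (px (blowup st)) (py (blowup st))" by (metis gen.intros)
    moreover have "Y \<in> gen (px (blowup st)) (py (blowup st))" using b(2) Y_def gen.gy by simp
    ultimately show ?thesis using gen_sub X_def Y_def by blast
  qed
qed

lemma gen_comp:
  assumes G0: "G $ 0 = 0" and YF: "Y = F oo G" and f: "f \<in> gen G Y"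
  shows "\<exists>P. f = P oo G"
  using f
proof (induction rule: gen.induct)
  case (gc c) then show ?case by (metis fps_const_compose)
next
  case gx then show ?case using fps_X_fps_compose_startby0[OF G0] by metis
next
  case gy then show ?case using YF by blast
next
  case (ga a b) then show ?case by (metis fps_compose_add_distrib)
next
  case (gm a b) then show ?case by (metis fps_compose_mult_distrib[OF G0])
qed

lemma mult_X_eq:
  fixes X F F' :: "complex fps"
  assumes "X $ 0 = 0" "\<forall>j<k. F $ j = F' $ j"
  shows "(X * F) $ k = (X * F') $ k"
proof -
  have "(X * F) $ k = (\<Sum>i=0..k. X $ i * F $ (k - i))" by (simp add: fps_mult_nth)
  also have "\<dots> = (\<Sum>i=0..k. X $ i * F' $ (k - i))"
  proof (rule sum.cong[OF refl])
    fix i assume "i \<in> {0..k}"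
    show "X $ i * F $ (k - i) = X $ i * F' $ (k - i)"
      using assms \<open>i \<in> {0..k}\<close> by (cases "i = 0") auto
  qed
  also have "\<dots> = (X * F') $ k" by (simp add: fps_mult_nth)
  finally show ?thesis .
qed


lemma no_res_step:
  assumes "\<not> (\<exists>R. resolves st R)"
  shows "\<not> good st" "\<not> (\<exists>R. resolves (blowup st) R)"
  using assms resolves.intros by blast+

lemma sd_pos: "(F :: complex fps) \<noteq> 0 \<Longrightarrow> F $ 0 = 0 \<Longrightarrow> subdegree F \<ge> 1"
  using subdegree_eq_0_iff[of F] by simp

theorem exists_res:
  assumes n2: "n \<ge> 2" and sy: "subdegree y \<ge> n"
    and prim: "Gcd ({n} \<union> {k. y $ k \<noteq> 0}) = 1"
  shows "\<exists>R. resolves (init_state n y) R"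
proof (rule ccontr)
  assume nr: "\<not> (\<exists>R. resolves (init_state n y) R)"
  define st where "st i = (blowup ^^ i) (init_state n y)" for i
  have stS: "st (Suc i) = blowup (st i)" for i unfolding st_def by simp
  have nri: "\<not> (\<exists>R. resolves (st i) R)" for i
  proof (induction i)
    case 0 then show ?case using nr unfolding st_def by simp
  next
    case (Suc i) then show ?case using no_res_step(2) stS by metis
  qed
  have ng: "\<not> good (st i)" for i using no_res_step(1)[OF nri] .
  have I: "INV (st i)" for i
  proof (induction i)
    case 0 then show ?case using INV_init[of n y] n2 sy unfolding st_def by simp
  next
    case (Suc i) then show ?case using INV_blowup stS by simp
  qed
  define X where "X i = px (st i)" for i
  define Y where "Y i = py (st i)" for i
  define a where "a i = subdegree (X i)" for i
  have X0: "X i \<noteq> 0" "X i $ 0 = 0" and Y0: "Y i $ 0 = 0" for i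
    using I[of i] unfolding INV_def X_def Y_def by auto
  have step1: "X (Suc i) = X i" if "Y i = 0 \<or> a i \<le> subdegree (Y i)" for i
    using blowup_b1[of "st i"] that stS unfolding X_def Y_def a_def by simp
  have step2: "a (Suc i) < a i" if "\<not> (Y i = 0 \<or> a i \<le> subdegree (Y i))" for i
  proof -
    have c: "\<not> (py (st i) = 0 \<or> subdegree (px (st i)) \<le> subdegree (py (st i)))"
      using that unfolding X_def Y_def a_def by simp
    have Yn: "Y i \<noteq> 0" "subdegree (Y i) < subdegree (X i)" using that unfolding a_def by auto
    have "X (Suc i) = fdiv (X i) (Y i)" using blowup_b2(1)[OF c] stS unfolding X_def Y_def by simp
    then have e: "Y i * X (Suc i) = X i" using fdiv_b2(3)[OF Yn] by simp
    have "subdegree (X i) = subdegree (Y i) + subdegree (X (Suc i))"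
      using e[symmetric] Yn(1) X0[of "Suc i"] by simp
    moreover have "subdegree (Y i) \<ge> 1" using sd_pos[OF Yn(1) Y0] .
    ultimately show ?thesis unfolding a_def by simp
  qed
  have amono: "a (Suc i) \<le> a i" for i
  proof (cases "Y i = 0 \<or> a i \<le> subdegree (Y i)")
    case True then show ?thesis using step1[OF True] unfolding a_def by simp
  next
    case False then show ?thesis using step2[OF False] by simp
  qed
  define amin where "amin = (LEAST v. \<exists>i. a i = v)"
  have "\<exists>i. a i = amin" unfolding amin_def by (rule LeastI_ex) blast
  then obtain N where aN: "a N = amin" by blast
  have amin_le: "a N \<le> a i" for i unfolding aN amin_def by (rule Least_le) blast
  have adec: "a (N + j) \<le> a N" for j
  proof (induction j)
    case 0 then show ?case by simp
  next
    case (Suc j) then show ?case using amono[of "N + j"] by simp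
  qed
  have aconst: "a (N + j) = a N" for j using adec[of j] amin_le[of "N + j"] by simp
  have br1: "Y (N + j) = 0 \<or> a (N + j) \<le> subdegree (Y (N + j))" for j
  proof (rule ccontr)
    assume "\<not> (Y (N + j) = 0 \<or> a (N + j) \<le> subdegree (Y (N + j)))"
    then have "a (Suc (N + j)) < a (N + j)" by (rule step2)
    then show False using aconst[of j] aconst[of "Suc j"] by simp
  qed
  have Xc: "X (N + j) = X N" for j
  proof (induction j)
    case 0 then show ?case by simp
  next
    case (Suc j) then show ?case using step1[OF br1[of j]] by simp
  qed
  define XN where "XN = X N"
  have XN0: "XN \<noteq> 0" "XN $ 0 = 0" using X0 XN_def by auto
  define W where "W j = fdiv (Y (N + j)) XN" for j
  define c where "c j = W j $ 0" for j
  have b1: "py (st i) = 0 \<or> subdegree (px (st i)) \<le> subdegree (py (st i))" if "i \<ge> N" for i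
    using br1[of "i - N"] that unfolding X_def Y_def a_def by simp
  have Ynext: "Y (N + Suc j) = W j - fps_const (c j)" for j
    using blowup_b1(2)[OF b1[of "N + j"]] stS[of "N + j"] Xc[of j]
    unfolding Y_def W_def c_def XN_def X_def by simp
  have XW: "XN * W j = Y (N + j)" for j
    unfolding W_def using fdiv_mult[OF XN0(1)] br1[of j] aconst[of j] Xc[of j]
    unfolding a_def XN_def by simp
  have ay_next: "ay (st (N + Suc j)) = (if c j = 0 then ay (st (N + j)) else None)" for j
    using blowup_b1(4)[OF b1[of "N + j"]] stS[of "N + j"] Xc[of j]
    unfolding Y_def W_def c_def XN_def X_def by simp
  have ax_next: "ax (st (N + Suc j)) = Some (nv (st (N + j)))" for j
    using blowup_b1(3)[OF b1[of "N + j"]] stS[of "N + j"] by simp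
  have aN1: "a N \<ge> 1" using sd_pos[OF XN0] unfolding a_def XN_def by simp
  show False
  proof (cases "a N = 1")
    case True
    have ayn: "ay (st (N + Suc j)) \<noteq> None" for j
    proof
      assume h: "ay (st (N + Suc j)) = None"
      have "px (st (N + Suc j)) = XN" using Xc[of "Suc j"] unfolding X_def XN_def by simp
      then have "good (st (N + Suc j))"
        unfolding good_def using h ax_next[of j] XN0 True unfolding a_def XN_def by simp
      then show False using ng by blast
    qed
    have cz: "c j = 0" for j
    proof (rule ccontr)
      assume "c j \<noteq> 0"
      then have "ay (st (N + Suc j)) = None" using ay_next[of j] by simp
      then show False using ayn by blast
    qed
    have Yn: "Y (N + Suc j) \<noteq> 0" for j
      using I[of "N + Suc j"] ayn[of j] unfolding INV_def Y_def by blast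
    have rec: "subdegree (Y (N + j)) = 1 + subdegree (Y (N + Suc j))" for j
    proof -
      have "W j = Y (N + Suc j)" using Ynext[of j] cz[of j] by simp
      then have "Y (N + j) = XN * Y (N + Suc j)" using XW[of j] by simp
      then show ?thesis using XN0 Yn[of j] True unfolding a_def XN_def by simp
    qed
    have "subdegree (Y N) = j + subdegree (Y (N + j))" for j
    proof (induction j)
      case 0 then show ?case by simp
    next
      case (Suc j) then show ?case using rec[of j] by simp
    qed
    from this[of "Suc (subdegree (Y N))"] show False by simp
  next
    case False
    then have aN2: "a N \<ge> 2" using aN1 by simp
    have Wrec: "W j = fps_const (c j) + XN * W (Suc j)" for j
      using Ynext[of j] XW[of "Suc j"] by (simp add: algebra_simps)
    define C where "C j = Abs_fps (\<lambda>k. c (j + k))" for j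
    have Crec: "C j = fps_const (c j) + fps_X * C (Suc j)" for j
      by (rule fps_ext) (auto simp: C_def)
    have CXrec: "C j oo XN = fps_const (c j) + XN * (C (Suc j) oo XN)" for j
      by (subst Crec) (simp add: fps_compose_add_distrib fps_compose_mult_distrib[OF XN0(2)] fps_X_fps_compose_startby0[OF XN0(2)])
    have WC: "\<forall>j. W j $ k = (C j oo XN) $ k" for k
    proof (induction k rule: less_induct)
      case (less k)
      show ?case
      proof
        fix j
        have "(XN * W (Suc j)) $ k = (XN * (C (Suc j) oo XN)) $ k"
          by (rule mult_X_eq[OF XN0(2)]) (use less in blast)
        then show "W j $ k = (C j oo XN) $ k"
          by (subst Wrec, subst CXrec) simp
      qed
    qed
    have W0: "W 0 = C 0 oo XN" by (rule fps_ext) (use WC in blast)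
    have YN: "Y N = (fps_X * C 0) oo XN"
      using XW[of 0] W0 by (simp add: fps_compose_mult_distrib[OF XN0(2)] fps_X_fps_compose_startby0[OF XN0(2)])
    have gchain: "gen (X 0) (Y 0) \<subseteq> gen (X i) (Y i)" for i
    proof (induction i)
      case 0 then show ?case by simp
    next
      case (Suc i) then show ?case using gen_step[OF I[of i]] stS[of i] unfolding X_def Y_def by auto
    qed
    have X00: "X 0 = fps_X ^ n" "Y 0 = y" unfolding X_def Y_def st_def init_state_def by simp_all
    have "fps_X ^ n \<in> gen XN (Y N)" using gchain[of N] X00 gen.gx[of "X 0" "Y 0"] unfolding XN_def by auto
    then obtain P where P: "fps_X ^ n = P oo XN" using gen_comp[OF XN0(2) YN] by blast
    have "y \<in> gen XN (Y N)" using gchain[of N] X00 gen.gy[of "Y 0" "X 0"] unfolding XN_def by auto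
    then obtain Q where Q: "y = Q oo XN" using gen_comp[OF XN0(2) YN] by blast
    have "Gcd ({n} \<union> {k. y $ k \<noteq> 0}) \<noteq> 1"
      by (rule key_prim[OF XN0(1) _ _ P Q]) (use aN2 n2 in \<open>auto simp: a_def XN_def\<close>)
    then show False using prim by simp
  qed
qed


lemma init_not_good:
  assumes "n \<ge> 2" "subdegree y \<ge> n"
  shows "\<not> good (init_state n y)"
proof -
  have sx: "subdegree (fps_X ^ n :: complex fps) = n" by (simp add: fps_X_power_subdegree)
  have "bmult (fps_X ^ n) y \<ge> 2"
    unfolding bmult_def using sx assms by auto
  then show ?thesis unfolding good_def init_state_def by simp
qed

theorem lemma2p4p2:
  fixes n :: nat and y :: "complex fps" and p q :: nat and ks :: "int list"
  assumes mult: "n \<ge> 2"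
    and tangent: "subdegree y \<ge> n"
    and conv: "fps_conv_radius y > 0"
    and primitive: "Gcd ({n} \<union> {k. fps_nth y k \<noteq> 0}) = 1"
    and pq: "0 < p" "0 < q" "coprime p q"
    and ks: "ks \<noteq> []" "hd ks \<ge> 1" "\<forall>k\<in>set (tl ks). k \<ge> 2"
            "hjcf ks = real p / real q"
  shows "(\<exists>R. resolves (init_state n y) R) \<and>
         (\<forall>R. resolves (init_state n y) R \<longrightarrow>
              AR_graph (GM_V R ks) (GM_e R ks) (GM_A R ks))"
proof
  show "\<exists>R. resolves (init_state n y) R" using exists_res[OF mult tangent primitive] .
  show "\<forall>R. resolves (init_state n y) R \<longrightarrow> AR_graph (GM_V R ks) (GM_e R ks) (GM_A R ks)"
  proof (intro allI impI)
    fix R assume r: "resolves (init_state n y) R"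
    have I: "INV R" using resolves_INV[OF r INV_init] mult tangent by simp
    have "nv (init_state n y) < nv R" using resolves_nv[OF r init_not_good[OF mult tangent]] .
    then have "nv R > 0" by simp
    then show "AR_graph (GM_V R ks) (GM_e R ks) (GM_A R ks)" using AR_part[OF I _ ks(1,2,3)] by simp
  qed
qed

end
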